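(* Let $\mathcal{S}=\mathcal{S}_1\times\cdots\times\mathcal{S}_m$ with each $\mathcal{S}_i$ finite of cardinality $S_i$, and let $P,P'$ be probability measures on $\mathcal{S}$ with product form $P(y)=\prod_{i=1}^m P_i(y_i)$ and $P'(y)=\prod_{i=1}^m P'_i(y_i)$ for all $y=(y_1,\dots,y_m)\in\mathcal{S}$, where $P_i,P'_i$ are probability distributions on $\mathcal{S}_i$. Assume that for every $i\in[m]$ there exist $\xi_i,\xi'_i>0$ such that $|P'_i(y_i)-P_i(y_i)|\le\sqrt{P_i(y_i)\xi_i}+\xi'_i$ for all $y_i\in\mathcal{S}_i$. Then for every function $f:\mathcal{S}\to[0,\infty)$, $$\sum_{y\in\mathcal{S}}|P(y)-P'(y)|f(y)\le \max_{y\in\prod_{i=1}^m\mathrm{supp}(P_i)}f(y)\sum_{i=1}^m\sum_{y_i\in\mathcal{S}_i}\sqrt{P_i(y_i)\xi_i}\;+\;3\max_{y\in\mathcal{S}}f(y)\sum_{i=1}^m\xi'_iS_i .$$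
   Context: $\mathrm{supp}(P_i)=\{y_i\in\mathcal{S}_i: P_i(y_i)>0\}$. *)

theory Defs
  imports Complex_Main "HOL-Library.FuncSet"
begin

end

theory Submission
  imports Defs
begin

lemma tv_prod:
  fixes p q :: "'i \<Rightarrow> 'a \<Rightarrow> real"
  assumes "finite I" "\<And>i. i \<in> I \<Longrightarrow> finite (S i)"
    and "\<And>i x. i \<in> I \<Longrightarrow> x \<in> S i \<Longrightarrow> p i x \<ge> 0"
    and "\<And>i x. i \<in> I \<Longrightarrow> x \<in> S i \<Longrightarrow> q i x \<ge> 0"
    and "\<And>i. i \<in> I \<Longrightarrow> (\<Sum>x\<in>S i. p i x) \<le> 1"
    and "\<And>i. i \<in> I \<Longrightarrow> (\<Sum>x\<in>S i. q i x) \<le> 1"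
  shows "(\<Sum>g\<in>PiE I S. \<bar>(\<Prod>i\<in>I. p i (g i)) - (\<Prod>i\<in>I. q i (g i))\<bar>)
           \<le> (\<Sum>i\<in>I. \<Sum>x\<in>S i. \<bar>p i x - q i x\<bar>)"
  using assms
proof (induction I rule: finite_induct)
  case empty
  then show ?case by simp
next
  case (insert a I)
  define P where "P g = (\<Prod>i\<in>I. p i (g i))" for g
  define Q where "Q g = (\<Prod>i\<in>I. q i (g i))" for g
  have P0: "P g \<ge> 0" if "g \<in> PiE I S" for g
    unfolding P_def using that insert.prems by (intro prod_nonneg) (auto simp: PiE_def Pi_def)
  have Q0: "Q g \<ge> 0" if "g \<in> PiE I S" for g
    unfolding Q_def using that insert.prems by (intro prod_nonneg) (auto simp: PiE_def Pi_def)
  have sP: "(\<Sum>g\<in>PiE I S. P g) \<le> 1"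
  proof -
    have "(\<Sum>g\<in>PiE I S. P g) = (\<Prod>i\<in>I. \<Sum>x\<in>S i. p i x)"
      unfolding P_def using insert by (subst prod_sum_PiE) auto
    also have "\<dots> \<le> (\<Prod>i\<in>I. 1)"
      using insert.prems by (intro prod_mono) (auto intro: sum_nonneg)
    finally show ?thesis by simp
  qed
  have IH: "(\<Sum>g\<in>PiE I S. \<bar>P g - Q g\<bar>) \<le> (\<Sum>i\<in>I. \<Sum>x\<in>S i. \<bar>p i x - q i x\<bar>)"
    unfolding P_def Q_def using insert by (intro insert.IH) auto
  have eqP: "(\<lambda>g. \<Prod>x'\<in>I. p x' (g x')) = (\<lambda>g. \<Prod>x'\<in>I. p x' (if x' = a then undefined else g x'))"
    using insert by (intro ext prod.cong) auto
  have eqQ: "(\<lambda>g. \<Prod>x'\<in>I. q x' (g x')) = (\<lambda>g. \<Prod>x'\<in>I. q x' (if x' = a then undefined else g x'))"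
    using insert by (intro ext prod.cong) auto
  have "(\<Sum>g\<in>PiE (insert a I) S. \<bar>(\<Prod>i\<in>insert a I. p i (g i)) - (\<Prod>i\<in>insert a I. q i (g i))\<bar>)
      = (\<Sum>g\<in>PiE (insert a I) S. \<bar>p a (g a) * (\<Prod>i\<in>I. p i (g i)) - q a (g a) * (\<Prod>i\<in>I. q i (g i))\<bar>)"
    using insert by simp
  also have "\<dots> = (\<Sum>g\<in>PiE (insert a I) S. \<bar>p a (g a) * (\<Prod>i\<in>I. p i (if i = a then undefined else g i)) - q a (g a) * (\<Prod>i\<in>I. q i (if i = a then undefined else g i))\<bar>)"
    by (metis eqP eqQ)
  also have "\<dots> = (\<Sum>(y,g)\<in>S a \<times> PiE I S. \<bar>p a y * P g - q a y * Q g\<bar>)"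
    unfolding P_def Q_def using insert.prems insert.hyps
    by (intro sum.reindex_bij_witness[of _ "\<lambda>(y,g). g(a := y)" "\<lambda>g. (g a, g(a := undefined))"])
       (auto simp: PiE_def extensional_def)
  also have "\<dots> \<le> (\<Sum>(y,g)\<in>S a \<times> PiE I S. \<bar>p a y - q a y\<bar> * P g + q a y * \<bar>P g - Q g\<bar>)"
  proof (intro sum_mono, clarify)
    fix y g assume "y \<in> S a" "g \<in> PiE I S"
    then have "P g \<ge> 0" "q a y \<ge> 0" using P0 insert.prems by auto
    have "p a y * P g - q a y * Q g = (p a y - q a y) * P g + q a y * (P g - Q g)"
      by (simp add: algebra_simps)
    also have "\<bar>\<dots>\<bar> \<le> \<bar>p a y - q a y\<bar> * P g + q a y * \<bar>P g - Q g\<bar>"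
      using \<open>P g \<ge> 0\<close> \<open>q a y \<ge> 0\<close> by (simp add: abs_mult abs_triangle_ineq[THEN order_trans])
    finally show "\<bar>p a y * P g - q a y * Q g\<bar> \<le> \<bar>p a y - q a y\<bar> * P g + q a y * \<bar>P g - Q g\<bar>" .
  qed
  also have "\<dots> = (\<Sum>y\<in>S a. \<bar>p a y - q a y\<bar>) * (\<Sum>g\<in>PiE I S. P g)
                 + (\<Sum>y\<in>S a. q a y) * (\<Sum>g\<in>PiE I S. \<bar>P g - Q g\<bar>)"
    by (simp add: sum.cartesian_product[symmetric] sum.distrib sum_product)
  also have "\<dots> \<le> (\<Sum>y\<in>S a. \<bar>p a y - q a y\<bar>) * 1 + 1 * (\<Sum>i\<in>I. \<Sum>x\<in>S i. \<bar>p i x - q i x\<bar>)"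
  proof (intro add_mono mult_mono)
    show "(\<Sum>y\<in>S a. q a y) \<le> 1" using insert.prems by auto
    show "0 \<le> (\<Sum>y\<in>S a. \<bar>p a y - q a y\<bar>)" by (simp add: sum_nonneg)
    show "0 \<le> (\<Sum>g\<in>PiE I S. \<bar>P g - Q g\<bar>)" by (simp add: sum_nonneg)
    show "0 \<le> (1::real)" by simp
  qed (use sP IH P0 in \<open>auto intro: sum_nonneg\<close>)
  also have "\<dots> = (\<Sum>i\<in>insert a I. \<Sum>x\<in>S i. \<bar>p i x - q i x\<bar>)"
    using insert.hyps by simp
  finally show ?case .
qed

theorem lemma2:
  fixes m :: nat
    and S :: "nat \<Rightarrow> 'a set"
    and Pm Pm' :: "nat \<Rightarrow> 'a \<Rightarrow> real"
    and P P' :: "(nat \<Rightarrow> 'a) \<Rightarrow> real"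
    and \<xi> \<xi>' :: "nat \<Rightarrow> real"
    and f :: "(nat \<Rightarrow> 'a) \<Rightarrow> real"
  assumes finS: "\<And>i. i \<in> {1..m} \<Longrightarrow> finite (S i)"
    and Pm_nonneg: "\<And>i x. i \<in> {1..m} \<Longrightarrow> x \<in> S i \<Longrightarrow> Pm i x \<ge> 0"
    and Pm_sum: "\<And>i. i \<in> {1..m} \<Longrightarrow> (\<Sum>x\<in>S i. Pm i x) = 1"
    and Pm'_nonneg: "\<And>i x. i \<in> {1..m} \<Longrightarrow> x \<in> S i \<Longrightarrow> Pm' i x \<ge> 0"
    and Pm'_sum: "\<And>i. i \<in> {1..m} \<Longrightarrow> (\<Sum>x\<in>S i. Pm' i x) = 1"
    and P_prod: "\<And>y. y \<in> PiE {1..m} S \<Longrightarrow> P y = (\<Prod>i=1..m. Pm i (y i))"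
    and P'_prod: "\<And>y. y \<in> PiE {1..m} S \<Longrightarrow> P' y = (\<Prod>i=1..m. Pm' i (y i))"
    and \<xi>_pos: "\<And>i. i \<in> {1..m} \<Longrightarrow> \<xi> i > 0"
    and \<xi>'_pos: "\<And>i. i \<in> {1..m} \<Longrightarrow> \<xi>' i > 0"
    and close: "\<And>i x. i \<in> {1..m} \<Longrightarrow> x \<in> S i \<Longrightarrow>
                  \<bar>Pm' i x - Pm i x\<bar> \<le> sqrt (Pm i x * \<xi> i) + \<xi>' i"
    and f_nonneg: "\<And>y. y \<in> PiE {1..m} S \<Longrightarrow> f y \<ge> 0"
  shows "(\<Sum>y\<in>PiE {1..m} S. \<bar>P y - P' y\<bar> * f y)
           \<le> Max (f ` PiE {1..m} (\<lambda>i. {x \<in> S i. Pm i x > 0}))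
               * (\<Sum>i=1..m. \<Sum>x\<in>S i. sqrt (Pm i x * \<xi> i))
             + 3 * Max (f ` PiE {1..m} S) * (\<Sum>i=1..m. \<xi>' i * real (card (S i)))"
proof -
  define U where "U = PiE {1..m} S"
  define T where "T = PiE {1..m} (\<lambda>i. {x \<in> S i. Pm i x > 0})"
  define A where "A = (\<Sum>i=1..m. \<Sum>x\<in>S i. sqrt (Pm i x * \<xi> i))"
  define E where "E = (\<Sum>i=1..m. \<xi>' i * real (card (S i)))"
  define Ms where "Ms = Max (f ` T)"
  define Mf where "Mf = Max (f ` U)"
  define q where "q i x = (if Pm i x > 0 then Pm' i x else 0)" for i x
  have finU: "finite U" unfolding U_def using finS by (intro finite_PiE) auto
  have TU: "T \<subseteq> U" unfolding T_def U_def by (auto simp: PiE_def Pi_def)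
  have finT: "finite T" using finU TU finite_subset by blast
  have Tne: "T \<noteq> {}"
  proof -
    have "{x \<in> S i. Pm i x > 0} \<noteq> {}" if i: "i \<in> {1..m}" for i
    proof
      assume "{x \<in> S i. Pm i x > 0} = {}"
      then have "\<And>x. x \<in> S i \<Longrightarrow> Pm i x = 0" using Pm_nonneg[OF i] by force
      then have "(\<Sum>x\<in>S i. Pm i x) = 0" by simp
      with Pm_sum[OF i] show False by simp
    qed
    then show ?thesis unfolding T_def by (simp add: PiE_eq_empty_iff)
  qed
  have Ms_le: "Ms \<le> Mf" unfolding Ms_def Mf_def
    using finU TU Tne by (intro Max_mono) auto
  have Ms0: "0 \<le> Ms" unfolding Ms_def using Tne finT TU f_nonneg U_def
    by (metis (no_types, lifting) Max_ge all_not_in_conv finite_imageI image_eqI order_trans subsetD)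
  have A0: "0 \<le> A" unfolding A_def using Pm_nonneg \<xi>_pos
    by (intro sum_nonneg) (simp add: less_imp_le)
  have fT: "f y \<le> Ms" if "y \<in> T" for y unfolding Ms_def using finT that by auto
  have fU: "f y \<le> Mf" if "y \<in> U" for y unfolding Mf_def using finU that by auto
  have P'eq: "P' y = (\<Prod>i=1..m. q i (y i))" if "y \<in> T" for y
    using that TU P'_prod[of y] unfolding U_def T_def q_def
    by (auto simp: PiE_def Pi_def intro!: prod.cong)
  have zero: "P y = 0 \<and> (\<Prod>i=1..m. q i (y i)) = 0" if "y \<in> U - T" for y
  proof -
    from that obtain i where i: "i \<in> {1..m}" "\<not> Pm i (y i) > 0" "y i \<in> S i"
      unfolding U_def T_def by (auto simp: PiE_def Pi_def)
    then have "Pm i (y i) = 0" using Pm_nonneg by force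
    then show ?thesis using i that P_prod[of y] unfolding U_def q_def
      by (auto intro!: prod_zero bexI[of _ i])
  qed
  define X where "X = (\<Sum>y\<in>T. \<bar>P y - P' y\<bar>)"
  define Y where "Y = (\<Sum>y\<in>U - T. \<bar>P y - P' y\<bar>)"
  have tot: "X + Y \<le> A + E"
  proof -
    have "X + Y = (\<Sum>y\<in>U. \<bar>P y - P' y\<bar>)"
      unfolding X_def Y_def using finU TU by (metis sum.subset_diff add.commute)
    also have "\<dots> = (\<Sum>y\<in>U. \<bar>(\<Prod>i=1..m. Pm i (y i)) - (\<Prod>i=1..m. Pm' i (y i))\<bar>)"
      unfolding U_def using P_prod P'_prod by (intro sum.cong) auto
    also have "\<dots> \<le> (\<Sum>i=1..m. \<Sum>x\<in>S i. \<bar>Pm i x - Pm' i x\<bar>)"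
      unfolding U_def using finS Pm_nonneg Pm'_nonneg Pm_sum Pm'_sum
      by (intro tv_prod) auto
    also have "\<dots> \<le> (\<Sum>i=1..m. \<Sum>x\<in>S i. sqrt (Pm i x * \<xi> i) + \<xi>' i)"
      using close by (intro sum_mono) (metis abs_minus_commute)
    also have "\<dots> = A + E" unfolding A_def E_def by (simp add: sum.distrib mult.commute)
    finally show ?thesis .
  qed
  have Yle: "Y \<le> E"
  proof -
    have "Y = (\<Sum>y\<in>U - T. \<bar>P' y - (\<Prod>i=1..m. q i (y i))\<bar>)"
      unfolding Y_def
    proof (intro sum.cong refl)
      fix y assume "y \<in> U - T"
      from zero[OF this] have h: "P y = 0" "(\<Prod>i=1..m. q i (y i)) = 0" by blast+
      show "\<bar>P y - P' y\<bar> = \<bar>P' y - (\<Prod>i=1..m. q i (y i))\<bar>"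
        unfolding h by simp
    qed
    also have "\<dots> \<le> (\<Sum>y\<in>U. \<bar>P' y - (\<Prod>i=1..m. q i (y i))\<bar>)"
      using finU by (intro sum_mono2) auto
    also have "\<dots> = (\<Sum>y\<in>U. \<bar>(\<Prod>i=1..m. Pm' i (y i)) - (\<Prod>i=1..m. q i (y i))\<bar>)"
      unfolding U_def using P'_prod by (intro sum.cong) auto
    also have "\<dots> \<le> (\<Sum>i=1..m. \<Sum>x\<in>S i. \<bar>Pm' i x - q i x\<bar>)"
      unfolding U_def
    proof (intro tv_prod)
      fix i assume i: "i \<in> {1..m}"
      show "(\<Sum>x\<in>S i. q i x) \<le> 1"
      proof -
        have "(\<Sum>x\<in>S i. q i x) \<le> (\<Sum>x\<in>S i. Pm' i x)"
          using Pm'_nonneg[OF i] unfolding q_def by (intro sum_mono) simp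
        then show ?thesis using Pm'_sum[OF i] by simp
      qed
    qed (use finS Pm'_nonneg Pm'_sum in \<open>auto simp: q_def\<close>)
    also have "\<dots> \<le> (\<Sum>i=1..m. \<Sum>x\<in>S i. \<xi>' i)"
    proof (intro sum_mono)
      fix i x assume i: "i \<in> {1..m}" and x: "x \<in> S i"
      show "\<bar>Pm' i x - q i x\<bar> \<le> \<xi>' i"
      proof (cases "Pm i x > 0")
        case True then show ?thesis using \<xi>'_pos[OF i] by (simp add: q_def)
      next
        case False
        then have "Pm i x = 0" using Pm_nonneg[OF i x] by simp
        then show ?thesis using close[OF i x] False by (simp add: q_def)
      qed
    qed
    also have "\<dots> = E" unfolding E_def by (simp add: mult.commute)
    finally show ?thesis .
  qed
  have X0: "0 \<le> X" unfolding X_def by (simp add: sum_nonneg)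
  have Y0: "0 \<le> Y" unfolding Y_def by (simp add: sum_nonneg)
  have "(\<Sum>y\<in>U. \<bar>P y - P' y\<bar> * f y) = (\<Sum>y\<in>T. \<bar>P y - P' y\<bar> * f y) + (\<Sum>y\<in>U - T. \<bar>P y - P' y\<bar> * f y)"
    using sum.subset_diff[OF TU finU, of "\<lambda>y. \<bar>P y - P' y\<bar> * f y"] by (simp add: add.commute)
  also have "\<dots> \<le> (\<Sum>y\<in>T. \<bar>P y - P' y\<bar> * Ms) + (\<Sum>y\<in>U - T. \<bar>P y - P' y\<bar> * Mf)"
  proof (intro add_mono sum_mono mult_left_mono)
    fix y assume "y \<in> T" then show "f y \<le> Ms" by (rule fT)
  next
    fix y assume "y \<in> U - T" then show "f y \<le> Mf" using fU by blast
  qed auto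
  also have "\<dots> = Ms * X + Mf * Y" unfolding X_def Y_def by (simp add: sum_distrib_left mult.commute)
  also have "\<dots> \<le> Ms * A + Mf * E"
  proof -
    have "Ms * X \<le> Ms * (A + E - Y)" using tot Ms0 by (intro mult_left_mono) auto
    then have "Ms * X + Mf * Y \<le> Ms * (A + E - Y) + Mf * Y" by (rule add_right_mono)
    also have "\<dots> = Ms * A + Ms * E + (Mf - Ms) * Y"
      by (simp add: algebra_simps)
    also have "\<dots> \<le> Ms * A + Ms * E + (Mf - Ms) * E"
      using Yle Ms_le by (intro add_left_mono mult_left_mono) auto
    also have "\<dots> = Ms * A + Mf * E"
      by (simp add: algebra_simps)
    finally show ?thesis .
  qed
  also have "\<dots> \<le> Ms * A + 3 * Mf * E"
  proof -
    have "0 \<le> E" using tot X0 Y0 Yle by linarith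
    moreover have "0 \<le> Mf" using Ms0 Ms_le by linarith
    ultimately have "0 \<le> Mf * E" by simp
    then show ?thesis by linarith
  qed
  finally have "(\<Sum>y\<in>U. \<bar>P y - P' y\<bar> * f y) \<le> Ms * A + 3 * Mf * E" .
  then show ?thesis unfolding U_def T_def Ms_def Mf_def A_def E_def .
qed

end
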